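(* Let $\langle A,f,g\rangle$ be a PS-algebra satisfying (ABT0) $x\leq f(x,x)$, (ABT2) $y\cdot f(x,z)\leq f(x\cdot f(x,y),z)$ and (ABT3) $f(x,g(x,-y)\cdot y)\leq y$ for all $x,y,z\in A$. Then $\langle A,f,g\rangle$ satisfies (ABTW): $a\neq0\Rightarrow g(a,a)\leq a$ for all $a\in A$, if and only if it satisfies: for all $a,b\in A$, if $a\cdot b\neq0$ then $g(a,b)\leq f(a,b)$.
   Context: A PS-algebra is $\langle A,f,g\rangle$ where $A$ is a Boolean algebra with at least two elements (operations $+,\cdot,-,0,1$) and $f,g\colon A^2\to A$ satisfy: $f(x,y)=0$ whenever $x=0$ or $y=0$; $f$ is additive in each argument ($f(x+x',y)=f(x,y)+f(x',y)$, $f(x,y+y')=f(x,y)+f(x,y')$); $g(x,y)=1$ whenever $x=0$ or $y=0$; $g$ is co-additive in each argument ($g(x+x',y)=g(x,y)\cdot g(x',y)$, $g(x,y+y')=g(x,y)\cdot g(x,y')$). *)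

theory Defs
  imports Main
begin

text \<open>PS-algebra on a Boolean algebra of type 'a: + is sup, \<cdot> is inf, - is uminus,
  0 is bot, 1 is top.  The Boolean algebra must have at least two elements.\<close>

definition PS_algebra :: "('a::boolean_algebra \<Rightarrow> 'a \<Rightarrow> 'a) \<Rightarrow> ('a \<Rightarrow> 'a \<Rightarrow> 'a) \<Rightarrow> bool" where
  "PS_algebra f g \<longleftrightarrow>
     (bot::'a) \<noteq> top \<and>
     (\<forall>x y. (x = bot \<or> y = bot) \<longrightarrow> f x y = bot) \<and>
     (\<forall>x x' y. f (sup x x') y = sup (f x y) (f x' y)) \<and>
     (\<forall>x y y'. f x (sup y y') = sup (f x y) (f x y')) \<and>
     (\<forall>x y. (x = bot \<or> y = bot) \<longrightarrow> g x y = top) \<and>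
     (\<forall>x x' y. g (sup x x') y = inf (g x y) (g x' y)) \<and>
     (\<forall>x y y'. g x (sup y y') = inf (g x y) (g x y'))"

end

theory Submission
  imports Defs
begin

theorem lemma34:
  fixes f g :: "'a::boolean_algebra \<Rightarrow> 'a \<Rightarrow> 'a"
  assumes "PS_algebra f g"
    and ABT0: "\<forall>x. x \<le> f x x"
    and ABT2: "\<forall>x y z. inf y (f x z) \<le> f (inf x (f x y)) z"
    and ABT3: "\<forall>x y. f x (inf (g x (- y)) y) \<le> y"
  shows "(\<forall>a. a \<noteq> bot \<longrightarrow> g a a \<le> a) \<longleftrightarrow>
         (\<forall>a b. inf a b \<noteq> bot \<longrightarrow> g a b \<le> f a b)"
proof -
  have P: "\<forall>x y. (x = bot \<or> y = bot) \<longrightarrow> f x y = bot"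
    "\<forall>x x' y. f (sup x x') y = sup (f x y) (f x' y)"
    "\<forall>x y y'. f x (sup y y') = sup (f x y) (f x y')"
    "\<forall>x x' y. g (sup x x') y = inf (g x y) (g x' y)"
    "\<forall>x y y'. g x (sup y y') = inf (g x y) (g x y')"
    using assms(1) unfolding PS_algebra_def by simp_all
  have fm1: "f x y \<le> f x' y" if "x \<le> x'" for x x' y
  proof -
    have "f x' y = f (sup x x') y" using that by (simp add: sup.absorb2)
    also have "\<dots> = sup (f x y) (f x' y)" using P(2) by blast
    finally show ?thesis by (metis sup.cobounded1)
  qed
  have fm2: "f x y \<le> f x y'" if "y \<le> y'" for x y y'
  proof -
    have "f x y' = f x (sup y y')" using that by (simp add: sup.absorb2)
    also have "\<dots> = sup (f x y) (f x y')" using P(3) by blast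
    finally show ?thesis by (metis sup.cobounded1)
  qed
  have gm1: "g x' y \<le> g x y" if "x \<le> x'" for x x' y
  proof -
    have "g x' y = g (sup x x') y" using that by (simp add: sup.absorb2)
    also have "\<dots> = inf (g x y) (g x' y)" using P(4) by blast
    finally show ?thesis by (metis inf.cobounded1)
  qed
  have gm2: "g x y' \<le> g x y" if "y \<le> y'" for x y y'
  proof -
    have "g x y' = g x (sup y y')" using that by (simp add: sup.absorb2)
    also have "\<dots> = inf (g x y) (g x y')" using P(5) by blast
    finally show ?thesis by (metis inf.cobounded1)
  qed
  show ?thesis
  proof
    assume L: "\<forall>a. a \<noteq> bot \<longrightarrow> g a a \<le> a"
    show "\<forall>a b. inf a b \<noteq> bot \<longrightarrow> g a b \<le> f a b"
    proof (intro allI impI)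
      fix a b :: 'a assume ab: "inf a b \<noteq> bot"
      have "g a b \<le> g (inf a b) b" by (rule gm1) simp
      also have "\<dots> \<le> g (inf a b) (inf a b)" by (rule gm2) simp
      also have "\<dots> \<le> inf a b" using L ab by blast
      also have "\<dots> \<le> f (inf a b) (inf a b)" using ABT0 by blast
      also have "\<dots> \<le> f a (inf a b)" by (rule fm1) simp
      also have "\<dots> \<le> f a b" by (rule fm2) simp
      finally show "g a b \<le> f a b" .
    qed
  next
    assume R: "\<forall>a b. inf a b \<noteq> bot \<longrightarrow> g a b \<le> f a b"
    show "\<forall>a. a \<noteq> bot \<longrightarrow> g a a \<le> a"
    proof (intro allI impI)
      fix a :: 'a assume a: "a \<noteq> bot"
      define c where "c = inf (g a a) (- a)"
      have "g a a \<le> f a a" using R a by simp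
      hence c1: "c \<le> f a a" unfolding c_def using inf.coboundedI1 by blast
      have "f a c \<le> - a" using ABT3[rule_format, of a "- a"] unfolding c_def by simp
      hence "inf a (f a c) = bot" by (metis disjoint_eq_subset_Compl inf_commute le_iff_inf inf_compl_bot_right inf_left_commute inf_bot_right)
      hence "f (inf a (f a c)) a = bot" using P(1) by blast
      moreover have "inf c (f a a) \<le> f (inf a (f a c)) a" using ABT2 by blast
      ultimately have "c = bot" using c1 by (metis bot.extremum_uniqueI inf.absorb1)
      thus "g a a \<le> a" unfolding c_def
        by (simp add: inf_shunt)
    qed
  qed
qed

end
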